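(* There exist $\mathrm{x},\mathrm{y}\in T\mathbb{R}^2$ and a path of type RSL in $\Gamma(\mathrm{x},\mathrm{y})$ that is bounded-homotopic in $\Gamma(\mathrm{x},\mathrm{y})$ to a path of type LSR in $\Gamma(\mathrm{x},\mathrm{y})$. (In words: an RSL Dubins path can sometimes be deformed into an LSR Dubins path.)
   Context: Elements of $T\mathbb{R}^2$ are pairs $\mathrm{x}=(x,X)$ with $x\in\mathbb{R}^2$ and $X$ a unit tangent vector. A bounded curvature path from $\mathrm{x}=(x,X)$ to $\mathrm{y}=(y,Y)$ is a $C^1$, piecewise $C^2$ path $\gamma:[0,s]\to\mathbb{R}^2$ parametrized by arc length with $\gamma(0)=x,\gamma'(0)=X,\gamma(s)=y,\gamma'(s)=Y$ and $\|\gamma''\|\le1$ wherever defined; $\Gamma(\mathrm{x},\mathrm{y})$ is the space of these with the $C^1$ metric. A bounded curvature homotopy is a continuous one-parameter family $p\in[0,1]\mapsto\mathcal{H}(p)\in\Gamma(\mathrm{x},\mathrm{y})$ joining two paths; paths so joined are bounded-homotopic. A CSC (Dubins) path is a concatenation of an arc of a unit circle of length less than $2\pi$, a line segment, and an arc of a unit circle of length less than $2\pi$; R denotes a clockwise traversed arc, L a counterclockwise traversed arc, S the segment, so RSL is clockwise arc–segment–counterclockwise arc and LSR is counterclockwise arc–segment–clockwise arc. *)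

theory Defs
  imports "HOL-Analysis.Analysis"
begin

text \<open>The plane R^2 is modelled by the complex numbers. An element of the unit
tangent bundle is a pair (x, X) with norm X = 1. A path of length L is a pair
(L, g) where g : [0,L] \<rightarrow> C (values outside [0,L] are irrelevant).\<close>

definition tangent :: "real \<Rightarrow> (real \<Rightarrow> complex) \<Rightarrow> real \<Rightarrow> complex" where
  "tangent L g t = vector_derivative g (at t within {0..L})"

definition bcp :: "complex \<Rightarrow> complex \<Rightarrow> complex \<Rightarrow> complex \<Rightarrow> real \<Rightarrow> (real \<Rightarrow> complex) \<Rightarrow> bool" where
  "bcp x X y Y L g \<longleftrightarrow>
     0 < L \<and>
     g differentiable_on {0..L} \<and>
     continuous_on {0..L} (tangent L g) \<and>
     (\<forall>t\<in>{0..L}. norm (tangent L g t) = 1) \<and>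
     g 0 = x \<and> tangent L g 0 = X \<and> g L = y \<and> tangent L g L = Y \<and>
     (\<exists>K. finite K \<and>
          (tangent L g) C1_differentiable_on ({0<..<L} - K) \<and>
          (\<forall>t\<in>{0<..<L} - K. norm (vector_derivative (tangent L g) (at t)) \<le> 1))"

text \<open>C^1 closeness of two paths, after reparametrising both linearly over [0,1]:
position and derivative of t \<mapsto> g(L t) differ by less than e uniformly.\<close>
definition c1_close :: "real \<Rightarrow> real \<times> (real \<Rightarrow> complex) \<Rightarrow> real \<times> (real \<Rightarrow> complex) \<Rightarrow> bool" where
  "c1_close e P Q \<longleftrightarrow>
     (\<forall>t\<in>{0..1::real}.
        norm (snd P (fst P * t) - snd Q (fst Q * t))
        + norm (of_real (fst P) * tangent (fst P) (snd P) (fst P * t)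
                - of_real (fst Q) * tangent (fst Q) (snd Q) (fst Q * t)) < e)"

definition bounded_homotopic ::
  "complex \<Rightarrow> complex \<Rightarrow> complex \<Rightarrow> complex \<Rightarrow> real \<times> (real \<Rightarrow> complex) \<Rightarrow> real \<times> (real \<Rightarrow> complex) \<Rightarrow> bool" where
  "bounded_homotopic x X y Y P Q \<longleftrightarrow>
     (\<exists>H :: real \<Rightarrow> real \<times> (real \<Rightarrow> complex).
        H 0 = P \<and> H 1 = Q \<and>
        (\<forall>p\<in>{0..1}. bcp x X y Y (fst (H p)) (snd (H p))) \<and>
        (\<forall>p\<in>{0..1}. \<forall>e>0. \<exists>d>0. \<forall>q\<in>{0..1}. \<bar>q - p\<bar> < d \<longrightarrow> c1_close e (H q) (H p)))"

text \<open>Unit-radius arcs starting at p with unit direction d, parametrised by arc length: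
R = clockwise, L = counterclockwise.\<close>
definition arcR :: "complex \<Rightarrow> complex \<Rightarrow> real \<Rightarrow> complex" where
  "arcR p d t = p + \<i> * d * (exp (- \<i> * of_real t) - 1)"

definition arcL :: "complex \<Rightarrow> complex \<Rightarrow> real \<Rightarrow> complex" where
  "arcL p d t = p - \<i> * d * (exp (\<i> * of_real t) - 1)"

definition rsl_path :: "complex \<Rightarrow> complex \<Rightarrow> real \<Rightarrow> real \<Rightarrow> real \<Rightarrow> real \<Rightarrow> complex" where
  "rsl_path x X a b c t =
     (let p1 = arcR x X a; d1 = X * exp (- \<i> * of_real a); p2 = p1 + of_real b * d1 in
      if t \<le> a then arcR x X t
      else if t \<le> a + b then p1 + of_real (t - a) * d1
      else arcL p2 d1 (t - a - b))"

definition lsr_path :: "complex \<Rightarrow> complex \<Rightarrow> real \<Rightarrow> real \<Rightarrow> real \<Rightarrow> real \<Rightarrow> complex" where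
  "lsr_path x X a b c t =
     (let p1 = arcL x X a; d1 = X * exp (\<i> * of_real a); p2 = p1 + of_real b * d1 in
      if t \<le> a then arcL x X t
      else if t \<le> a + b then p1 + of_real (t - a) * d1
      else arcR p2 d1 (t - a - b))"

end

theory Submission
  imports Defs
begin


lemma exp_ii_diff: "cmod (exp (\<i> * of_real a) - exp (\<i> * of_real b)) \<le> \<bar>a - b\<bar>"
proof -
  have "(cmod (exp (\<i> * of_real a) - exp (\<i> * of_real b)))\<^sup>2 = (cos a - cos b)\<^sup>2 + (sin a - sin b)\<^sup>2"
    by (simp add: cmod_power2 flip: cis_conv_exp)
  also have "\<dots> = 2 - 2 * cos (a - b)"
    by (simp add: cos_diff power2_eq_square algebra_simps)
  also have "cos (a - b) = 1 - 2 * (sin ((a-b)/2))\<^sup>2"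
    using cos_double_sin[of "(a-b)/2"] by (metis times_divide_eq_right nonzero_mult_div_cancel_left zero_neq_numeral)
  also have "2 - 2 * (1 - 2 * (sin ((a-b)/2))\<^sup>2) = (2 * \<bar>sin ((a-b)/2)\<bar>)\<^sup>2"
    by (simp add: power2_eq_square)
  finally have e0: "(cmod (exp (\<i> * of_real a) - exp (\<i> * of_real b)))\<^sup>2 = (2 * \<bar>sin ((a-b)/2)\<bar>)\<^sup>2" .
  have e: "cmod (exp (\<i> * of_real a) - exp (\<i> * of_real b)) = 2 * \<bar>sin ((a-b)/2)\<bar>"
    using power2_eq_iff_nonneg[THEN iffD1, OF _ _ e0] by simp
  show ?thesis unfolding e using abs_sin_x_le_abs_x[of "(a-b)/2"] by simp
qed

definition gp :: "(real \<Rightarrow> real) \<Rightarrow> real \<Rightarrow> complex" where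
  "gp th t = integral {0..t} (\<lambda>s. exp (\<i> * of_real (th s)))"

lemma lip_cont:
  fixes th :: "real \<Rightarrow> real"
  assumes "\<forall>s s'. \<bar>th s - th s'\<bar> \<le> \<bar>s - s'\<bar>"
  shows "continuous_on S th"
proof -
  have "isCont th x" for x
    unfolding continuous_at_eps_delta dist_real_def
    using assms by (metis order_le_less_trans)
  then show ?thesis by (simp add: continuous_at_imp_continuous_on)
qed

lemma lip_cont_exp:
  assumes "\<forall>s s'. \<bar>th s - th s'\<bar> \<le> \<bar>s - s'\<bar>"
  shows "continuous_on S (\<lambda>s. exp (\<i> * of_real (th s)))"
  using lip_cont[OF assms] by (intro continuous_intros) auto

lemma gp_deriv:
  assumes "\<forall>s s'. \<bar>th s - th s'\<bar> \<le> \<bar>s - s'\<bar>" "t \<in> {0..L}"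
  shows "(gp th has_vector_derivative exp (\<i> * of_real (th t))) (at t within {0..L})"
  unfolding gp_def
  by (rule integral_has_vector_derivative[OF lip_cont_exp[OF assms(1)] assms(2)])

lemma tangent_gp:
  assumes "\<forall>s s'. \<bar>th s - th s'\<bar> \<le> \<bar>s - s'\<bar>" "t \<in> {0..L}" "0 < L"
  shows "tangent L (gp th) t = exp (\<i> * of_real (th t))"
  unfolding tangent_def
  by (rule vector_derivative_within_closed_interval[OF assms(3) assms(2) gp_deriv[OF assms(1,2)]])

lemma aff_deriv:
  assumes "\<forall>s\<in>U. f s = exp (\<i> * of_real (c + \<sigma> * s))" "open U" "t \<in> U"
  shows "(f has_vector_derivative (\<i> * of_real \<sigma> * exp (\<i> * of_real (c + \<sigma> * t)))) (at t)"
proof -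
  have "((\<lambda>z. exp (\<i> * (of_real c + of_real \<sigma> * z))) has_field_derivative
         (exp (\<i> * (of_real c + of_real \<sigma> * of_real t)) * (\<i> * of_real \<sigma>))) (at (of_real t))"
    by (auto intro!: derivative_eq_intros)
  from has_vector_derivative_real_field[OF this]
  have "((\<lambda>s. exp (\<i> * of_real (c + \<sigma> * s))) has_vector_derivative
         (\<i> * of_real \<sigma> * exp (\<i> * of_real (c + \<sigma> * t)))) (at t)"
    by (simp add: ac_simps)
  then show ?thesis
    by (rule has_vector_derivative_transform_within_open[OF _ assms(2,3)]) (use assms(1) in auto)
qed

lemma bcp_gen:
  assumes lip: "\<forall>s s'. \<bar>th s - th s'\<bar> \<le> \<bar>s - s'\<bar>"
    and L: "0 < L" and th0: "th 0 = 0" and thL: "exp (\<i> * of_real (th L)) = Y"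
    and gL: "gp th L = y" and K: "finite K"
    and aff: "\<forall>t\<in>{0<..<L} - K. \<exists>d>0. \<exists>c \<sigma>. \<bar>\<sigma>\<bar> \<le> 1 \<and> (\<forall>s. \<bar>s - t\<bar> < d \<longrightarrow> th s = c + \<sigma> * s)"
  shows "bcp 0 1 y Y L (gp th)"
proof -
  have tg: "t \<in> {0..L} \<Longrightarrow> tangent L (gp th) t = exp (\<i> * of_real (th t))" for t
    using tangent_gp[OF lip _ L] by blast
  have dif: "gp th differentiable_on {0..L}"
    unfolding differentiable_on_def using gp_deriv[OF lip] by (meson differentiableI_vector)
  have ct: "continuous_on {0..L} (tangent L (gp th))"
    using lip_cont_exp[OF lip] tg by (metis (no_types, lifting) continuous_on_cong)
  have g0: "gp th 0 = 0" by (simp add: gp_def)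
  define S where "S = {0<..<L} - K"
  have oS: "open S" unfolding S_def using K by (simp add: open_Diff finite_imp_closed)
  have loc: "\<exists>U c \<sigma>. open U \<and> t \<in> U \<and> U \<subseteq> {0<..<L} \<and> \<bar>\<sigma>\<bar> \<le> 1 \<and>
        (\<forall>s\<in>U. tangent L (gp th) s = exp (\<i> * of_real (c + \<sigma> * s)))" if "t \<in> S" for t
  proof -
    obtain d c \<sigma> where d: "d > 0" "\<bar>\<sigma>\<bar> \<le> 1" "\<forall>s. \<bar>s - t\<bar> < d \<longrightarrow> th s = c + \<sigma> * s"
      using aff \<open>t \<in> S\<close> unfolding S_def by meson
    show ?thesis
    proof (intro exI conjI)
      show "open (ball t d \<inter> {0<..<L})" by auto
      show "t \<in> ball t d \<inter> {0<..<L}" using d \<open>t \<in> S\<close> unfolding S_def by auto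
      show "ball t d \<inter> {0<..<L} \<subseteq> {0<..<L}" by auto
      show "\<bar>\<sigma>\<bar> \<le> 1" by fact
      show "\<forall>s\<in>ball t d \<inter> {0<..<L}. tangent L (gp th) s = exp (\<i> * of_real (c + \<sigma> * s))"
        using d(3) tg by (auto simp: dist_real_def abs_minus_commute)
    qed
  qed
  have der: "(tangent L (gp th) has_vector_derivative vector_derivative (tangent L (gp th)) (at t)) (at t)
        \<and> norm (vector_derivative (tangent L (gp th)) (at t)) \<le> 1
        \<and> isCont (\<lambda>t. vector_derivative (tangent L (gp th)) (at t)) t" if tS: "t \<in> S" for t
  proof -
    obtain U c \<sigma> where U: "open U" "t \<in> U" "U \<subseteq> {0<..<L}" "\<bar>\<sigma>\<bar> \<le> 1"
        "\<forall>s\<in>U. tangent L (gp th) s = exp (\<i> * of_real (c + \<sigma> * s))"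
      using loc[OF tS] by blast
    have hv: "s \<in> U \<Longrightarrow> (tangent L (gp th) has_vector_derivative (\<i> * of_real \<sigma> * exp (\<i> * of_real (c + \<sigma> * s)))) (at s)" for s
      using aff_deriv[OF U(5) U(1)] by blast
    have vd: "s \<in> U \<Longrightarrow> vector_derivative (tangent L (gp th)) (at s) = \<i> * of_real \<sigma> * exp (\<i> * of_real (c + \<sigma> * s))" for s
      using hv vector_derivative_at by blast
    have "isCont (\<lambda>s. \<i> * of_real \<sigma> * exp (\<i> * of_real (c + \<sigma> * s))) t"
      by (intro continuous_intros)
    moreover have "eventually (\<lambda>s. vector_derivative (tangent L (gp th)) (at s) = \<i> * of_real \<sigma> * exp (\<i> * of_real (c + \<sigma> * s))) (nhds t)"
      using U(1,2) vd eventually_nhds by blast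
    ultimately have "isCont (\<lambda>t. vector_derivative (tangent L (gp th)) (at t)) t"
      using isCont_cong[of "\<lambda>t. vector_derivative (tangent L (gp th)) (at t)"] by simp
    moreover have "norm (\<i> * of_real \<sigma> * exp (\<i> * of_real (c + \<sigma> * t))) \<le> 1"
      using U(4) by (simp add: norm_mult)
    ultimately show ?thesis using vd[OF U(2)] hv[OF U(2)] by simp
  qed
  have C1: "tangent L (gp th) C1_differentiable_on S"
    unfolding C1_differentiable_on_def
    by (rule exI[of _ "\<lambda>t. vector_derivative (tangent L (gp th)) (at t)"])
       (use der in \<open>auto intro!: continuous_at_imp_continuous_on\<close>)
  show ?thesis
    unfolding bcp_def
    using L dif ct tg g0 th0 gL thL C1 der K
    by (auto simp: S_def intro!: exI[of _ K])
qed

lemma gp_lip_s: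
  assumes lip: "\<forall>s s'. \<bar>th s - th s'\<bar> \<le> \<bar>s - s'\<bar>" and "0 \<le> s" "s \<le> s'"
  shows "norm (gp th s' - gp th s) \<le> s' - s"
proof -
  have int: "(\<lambda>s. exp (\<i> * of_real (th s))) integrable_on {0..s'}"
    by (intro integrable_continuous_interval lip_cont_exp[OF lip])
  have "gp th s' - gp th s = integral {s..s'} (\<lambda>s. exp (\<i> * of_real (th s)))"
    unfolding gp_def using Henstock_Kurzweil_Integration.integral_combine[OF assms(2,3) int] by (simp add: algebra_simps)
  also have "norm \<dots> \<le> 1 * (s' - s)"
    by (rule integral_bound[OF assms(3) lip_cont_exp[OF lip]]) simp
  finally show ?thesis by simp
qed

lemma gp_lip_par:
  assumes lip1: "\<forall>s s'. \<bar>th1 s - th1 s'\<bar> \<le> \<bar>s - s'\<bar>"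
    and lip2: "\<forall>s s'. \<bar>th2 s - th2 s'\<bar> \<le> \<bar>s - s'\<bar>"
    and B: "\<forall>r. \<bar>th1 r - th2 r\<bar> \<le> B" and s: "0 \<le> s"
  shows "norm (gp th1 s - gp th2 s) \<le> B * s"
proof -
  have "gp th1 s - gp th2 s = integral {0..s} (\<lambda>r. exp (\<i> * of_real (th1 r)) - exp (\<i> * of_real (th2 r)))"
    unfolding gp_def
    by (rule integral_diff[symmetric]; intro integrable_continuous_interval lip_cont_exp lip1 lip2)
  also have "norm \<dots> \<le> B * (s - 0)"
    by (rule integral_bound[OF s]) (use lip_cont[OF lip1] lip_cont[OF lip2] in
        \<open>auto intro!: continuous_intros order_trans[OF exp_ii_diff] simp: B\<close>)
  finally show ?thesis by simp
qed

lemma c1_cont_gen: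
  fixes th :: "real \<Rightarrow> real \<Rightarrow> real" and Lf :: "real \<Rightarrow> real"
  assumes lip: "\<forall>p\<in>{0..1}. \<forall>s s'. \<bar>th p s - th p s'\<bar> \<le> \<bar>s - s'\<bar>"
    and par: "\<forall>p\<in>{0..1}. \<forall>q\<in>{0..1}. \<forall>s. \<bar>th p s - th q s\<bar> \<le> M * \<bar>p - q\<bar>"
    and Llip: "\<forall>p\<in>{0..1}. \<forall>q\<in>{0..1}. \<bar>Lf p - Lf q\<bar> \<le> M * \<bar>p - q\<bar>"
    and Lpos: "\<forall>p\<in>{0..1}. 0 < Lf p \<and> Lf p \<le> M"
    and p: "p \<in> {0..1}" and e: "e > 0"
  shows "\<exists>d>0. \<forall>q\<in>{0..1}. \<bar>q - p\<bar> < d \<longrightarrow> c1_close e (Lf q, gp (th q)) (Lf p, gp (th p))"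
proof -
  have M0: "0 \<le> M" using Lpos p by force
  define C where "C = 3 * M * M + 2 * M + 1"
  have C0: "C > 0" unfolding C_def using M0 by (simp add: add_pos_nonneg add_nonneg_pos)
  show ?thesis
  proof (intro exI conjI ballI impI)
    show "e / C > 0" using e C0 by simp
    fix q assume q: "q \<in> {0..1}" and dq: "\<bar>q - p\<bar> < e / C"
    define D where "D = \<bar>p - q\<bar>"
    have D0: "0 \<le> D" unfolding D_def by simp
    have CD: "C * D < e" using dq C0 unfolding D_def by (simp add: field_simps abs_minus_commute)
    show "c1_close e (Lf q, gp (th q)) (Lf p, gp (th p))"
      unfolding c1_close_def fst_conv snd_conv
    proof
      fix t :: real assume t: "t \<in> {0..1}"
      define sq where "sq = Lf q * t"
      define sp where "sp = Lf p * t"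
      have Lq: "0 < Lf q" "Lf q \<le> M" using Lpos q by auto
      have Lp: "0 < Lf p" "Lf p \<le> M" using Lpos p by auto
      have sq0: "0 \<le> sq" "sq \<le> Lf q" "sq \<le> M" unfolding sq_def using t Lq
        by (auto simp: mult_left_le) (meson mult_left_le order_trans less_imp_le)
      have sp0: "0 \<le> sp" "sp \<le> Lf p" unfolding sp_def using t Lp
        by (auto simp: mult_left_le)
      have dLf: "\<bar>Lf q - Lf p\<bar> \<le> M * D" using Llip p q unfolding D_def by (metis abs_minus_commute)
      have dsqp: "\<bar>sq - sp\<bar> \<le> M * D"
      proof -
        have "\<bar>sq - sp\<bar> = \<bar>Lf q - Lf p\<bar> * t" unfolding sq_def sp_def using t
          by (simp add: abs_mult left_diff_distrib[symmetric])
        also have "\<dots> \<le> \<bar>Lf q - Lf p\<bar> * 1" using t by (intro mult_left_mono) auto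
        finally show ?thesis using dLf by simp
      qed
      have lipq: "\<forall>s s'. \<bar>th q s - th q s'\<bar> \<le> \<bar>s - s'\<bar>" using lip q by blast
      have lipp: "\<forall>s s'. \<bar>th p s - th p s'\<bar> \<le> \<bar>s - s'\<bar>" using lip p by blast
      have parqp: "\<forall>r. \<bar>th q r - th p r\<bar> \<le> M * D" using par p q unfolding D_def
        by (metis abs_minus_commute)
      have t1a: "norm (gp (th q) sq - gp (th p) sq) \<le> M * D * sq"
        by (rule gp_lip_par[OF lipq lipp parqp sq0(1)])
      have t1b: "norm (gp (th p) sq - gp (th p) sp) \<le> M * D"
      proof (cases "sp \<le> sq")
        case True
        then show ?thesis using gp_lip_s[OF lipp sp0(1) True] dsqp by simp
      next
        case False
        then show ?thesis using gp_lip_s[OF lipp sq0(1), of sp] dsqp by (simp add: norm_minus_commute)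
      qed
      have "M * D * sq \<le> M * D * M" using sq0 M0 D0 by (intro mult_left_mono) auto
      hence T1: "norm (gp (th q) sq - gp (th p) sp) \<le> M * D * M + M * D"
        using norm_triangle_le[of "gp (th q) sq - gp (th p) sq" "gp (th p) sq - gp (th p) sp"] t1a t1b
        by simp
      have tq: "tangent (Lf q) (gp (th q)) sq = exp (\<i> * of_real (th q sq))"
        using tangent_gp[OF lipq _ Lq(1)] sq0 by simp
      have tp: "tangent (Lf p) (gp (th p)) sp = exp (\<i> * of_real (th p sp))"
        using tangent_gp[OF lipp _ Lp(1)] sp0 by simp
      have dth: "\<bar>th q sq - th p sp\<bar> \<le> M * D + M * D"
        using parqp[rule_format, of sq] lipp[rule_format, of sq sp] dsqp by linarith
      have "norm (of_real (Lf q) * exp (\<i> * of_real (th q sq)) - of_real (Lf p) * exp (\<i> * of_real (th p sp)))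
          = norm (of_real (Lf q - Lf p) * exp (\<i> * of_real (th q sq))
             + of_real (Lf p) * (exp (\<i> * of_real (th q sq)) - exp (\<i> * of_real (th p sp))))"
        by (simp add: algebra_simps)
      also have "\<dots> \<le> norm (of_real (Lf q - Lf p) * exp (\<i> * of_real (th q sq)))
             + norm (of_real (Lf p) * (exp (\<i> * of_real (th q sq)) - exp (\<i> * of_real (th p sp))))"
        by (rule norm_triangle_ineq)
      also have "\<dots> = \<bar>Lf q - Lf p\<bar> + Lf p * norm (exp (\<i> * of_real (th q sq)) - exp (\<i> * of_real (th p sp)))"
        using Lp by (simp add: norm_mult flip: of_real_diff)
      also have "\<dots> \<le> \<bar>Lf q - Lf p\<bar> + Lf p * \<bar>th q sq - th p sp\<bar>"
        using exp_ii_diff[of "th q sq" "th p sp"] Lp by (simp add: mult_left_mono)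
      also have "\<dots> \<le> M * D + M * (M * D + M * D)"
        using dLf dth Lp D0 M0 by (intro add_mono mult_mono) auto
      finally have T2: "norm (of_real (Lf q) * tangent (Lf q) (gp (th q)) sq - of_real (Lf p) * tangent (Lf p) (gp (th p)) sp)
          \<le> M * D + M * (M * D + M * D)" using tq tp by simp
      have "C * D = (M * D * M + M * D) + (M * D + M * (M * D + M * D)) + D"
        unfolding C_def by (simp add: algebra_simps)
      then show "norm (gp (th q) (Lf q * t) - gp (th p) (Lf p * t)) +
          norm (of_real (Lf q) * tangent (Lf q) (gp (th q)) (Lf q * t) -
                of_real (Lf p) * tangent (Lf p) (gp (th p)) (Lf p * t)) < e"
        using T1 T2 CD D0 unfolding sq_def sp_def by linarith
    qed
  qed
qed



lemma tangent_cong: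
  assumes "\<forall>t\<in>{0..L}. f t = g t"
  shows "tangent L f = tangent L g"
proof
  fix t
  show "tangent L f t = tangent L g t"
  proof (cases "t \<in> {0..L}")
    case True
    have "(f has_vector_derivative D) (at t within {0..L}) \<longleftrightarrow> (g has_vector_derivative D) (at t within {0..L})" for D
      using has_vector_derivative_weaken[of f D t "{0..L}" "{0..L}" g]
            has_vector_derivative_weaken[of g D t "{0..L}" "{0..L}" f] True assms by auto
    then show ?thesis unfolding tangent_def vector_derivative_def by simp
  next
    case False
    have "t \<notin> closure ({0..L} - {t})"
      using False closure_mono[of "{0..L} - {t}" "{0..L::real}"] by auto
    hence bot: "at t within {0..L} = bot" using at_within_eq_bot_iff by blast
    have "(h has_vector_derivative D) (at t within {0..L})" for h :: "real \<Rightarrow> complex" and D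
      unfolding bot has_vector_derivative_def by (intro has_derivative_bot bounded_linear_scaleR_left)
    then show ?thesis unfolding tangent_def vector_derivative_def by simp
  qed
qed

lemma bcp_cong:
  assumes "\<forall>t\<in>{0..L}. f t = g t" "bcp x X y Y L f"
  shows "bcp x X y Y L g"
proof -
  have "g differentiable_on {0..L}"
    using assms(2) unfolding bcp_def differentiable_on_def differentiable_def has_derivative_within
    using assms(1) by (smt (verit, best) Lim_cong_within atLeastAtMost_iff)
  then show ?thesis using assms tangent_cong[OF assms(1)] unfolding bcp_def by auto
qed

lemma c1_close_cong:
  assumes "\<forall>t\<in>{0..L}. f t = g t" "0 \<le> L"
  shows "c1_close e (L, f) R = c1_close e (L, g) R" "c1_close e R (L, f) = c1_close e R (L, g)"
proof -
  have m: "t \<in> {0..1} \<Longrightarrow> L * t \<in> {0..L}" for t using assms(2) by (auto simp: mult_left_le)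
  show "c1_close e (L, f) R = c1_close e (L, g) R" "c1_close e R (L, f) = c1_close e R (L, g)"
    unfolding c1_close_def fst_conv snd_conv tangent_cong[OF assms(1)] using m assms(1) by auto
qed



definition thf :: "real \<Rightarrow> real \<Rightarrow> real \<Rightarrow> real \<Rightarrow> real \<Rightarrow> real \<Rightarrow> real" where
  "thf al A ga C ep s = - min s al + min ga (max 0 (s - A)) - min ep (max 0 (s - C))"

context
  fixes al A ga C ep :: real
  assumes ord: "0 \<le> al" "al \<le> A" "0 \<le> ga" "A + ga \<le> C" "0 \<le> ep"
begin
lemma r1: "s \<le> al \<Longrightarrow> thf al A ga C ep s = - s" using ord unfolding thf_def by (simp add: min_def max_def)
lemma r2: "al \<le> s \<Longrightarrow> s \<le> A \<Longrightarrow> thf al A ga C ep s = - al" using ord unfolding thf_def by (simp add: min_def max_def)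
lemma r3: "A \<le> s \<Longrightarrow> s \<le> A + ga \<Longrightarrow> thf al A ga C ep s = - al - A + s" using ord unfolding thf_def by (simp add: min_def max_def)
lemma r4: "A + ga \<le> s \<Longrightarrow> s \<le> C \<Longrightarrow> thf al A ga C ep s = - al + ga" using ord unfolding thf_def by (simp add: min_def max_def)
lemma r5: "C \<le> s \<Longrightarrow> s \<le> C + ep \<Longrightarrow> thf al A ga C ep s = - al + ga + C - s" using ord unfolding thf_def by (simp add: min_def max_def)
lemma r6: "C + ep \<le> s \<Longrightarrow> thf al A ga C ep s = - al + ga - ep" using ord unfolding thf_def by (simp add: min_def max_def)
definition "lip1 S f \<longleftrightarrow> (\<forall>s\<in>S. \<forall>s'\<in>S. \<bar>f s - f s'\<bar> \<le> \<bar>s - s'\<bar>)"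

lemma glue:
  fixes f :: "real \<Rightarrow> real"
  assumes "lip1 {..b} f" "lip1 {b..c} f" "b \<le> c"
  shows "lip1 {..c} f"
  unfolding lip1_def
proof (intro ballI)
  fix s s' assume s: "s \<in> {..c}" and s': "s' \<in> {..c}"
  have b1: "\<bar>f x - f b\<bar> \<le> \<bar>x - b\<bar>" if "x \<in> {..b}" for x using assms(1) that unfolding lip1_def by (meson atMost_iff order_refl)
  have b2: "\<bar>f x - f b\<bar> \<le> \<bar>x - b\<bar>" if "x \<in> {b..c}" for x using assms(2,3) that unfolding lip1_def by (meson atLeastAtMost_iff order_refl)
  show "\<bar>f s - f s'\<bar> \<le> \<bar>s - s'\<bar>"
  proof (cases "s \<le> b"; cases "s' \<le> b")
    assume "s \<le> b" "s' \<le> b" then show ?thesis using assms(1) unfolding lip1_def by auto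
  next
    assume "\<not> s \<le> b" "\<not> s' \<le> b" then show ?thesis using assms(2) s s' unfolding lip1_def by auto
  next
    assume a: "s \<le> b" "\<not> s' \<le> b"
    then show ?thesis using b1[of s] b2[of s'] s' by auto
  next
    assume a: "\<not> s \<le> b" "s' \<le> b"
    then show ?thesis using b1[of s'] b2[of s] s by auto
  qed
qed

lemma glue_univ:
  fixes f :: "real \<Rightarrow> real"
  assumes "lip1 {..b} f" "lip1 {b..} f"
  shows "\<forall>s s'. \<bar>f s - f s'\<bar> \<le> \<bar>s - s'\<bar>"
proof (intro allI)
  fix s s'
  have b1: "\<bar>f x - f b\<bar> \<le> \<bar>x - b\<bar>" if "x \<in> {..b}" for x using assms(1) that unfolding lip1_def by (meson atMost_iff order_refl)
  have b2: "\<bar>f x - f b\<bar> \<le> \<bar>x - b\<bar>" if "x \<in> {b..}" for x using assms(2) that unfolding lip1_def by (meson atLeast_iff order_refl)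
  show "\<bar>f s - f s'\<bar> \<le> \<bar>s - s'\<bar>"
  proof (cases "s \<le> b"; cases "s' \<le> b")
    assume "s \<le> b" "s' \<le> b" then show ?thesis using assms(1) unfolding lip1_def by auto
  next
    assume "\<not> s \<le> b" "\<not> s' \<le> b" then show ?thesis using assms(2) unfolding lip1_def by auto
  next
    assume a: "s \<le> b" "\<not> s' \<le> b"
    then show ?thesis using b1[of s] b2[of s'] by auto
  next
    assume a: "\<not> s \<le> b" "s' \<le> b"
    then show ?thesis using b1[of s'] b2[of s] by auto
  qed
qed

lemma thf_lip: "\<forall>s s'. \<bar>thf al A ga C ep s - thf al A ga C ep s'\<bar> \<le> \<bar>s - s'\<bar>"
proof -
  let ?f = "thf al A ga C ep"
  have l1: "lip1 {..al} ?f" unfolding lip1_def using r1 by (simp add: abs_minus_commute)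
  have l2: "lip1 {al..A} ?f" unfolding lip1_def using r2 by simp
  have l3: "lip1 {A..A+ga} ?f" unfolding lip1_def using r3 by simp
  have l4: "lip1 {A+ga..C} ?f" unfolding lip1_def using r4 by simp
  have l5: "lip1 {C..C+ep} ?f" unfolding lip1_def using r5 by (simp add: abs_minus_commute)
  have l6: "lip1 {C+ep..} ?f" unfolding lip1_def using r6 by simp
  have "lip1 {..A} ?f" by (rule glue[OF l1 l2 ord(2)])
  hence "lip1 {..A+ga} ?f" by (rule glue[OF _ l3]) (use ord in simp)
  hence "lip1 {..C} ?f" by (rule glue[OF _ l4]) (use ord in simp)
  hence "lip1 {..C+ep} ?f" by (rule glue[OF _ l5]) (use ord in simp)
  thus ?thesis by (rule glue_univ[OF _ l6])
qed

lemma thf_0: "thf al A ga C ep 0 = 0"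
  using r1[of 0] ord by simp

lemma thf_L: "thf al A ga C ep (C + ep) = - al + ga - ep"
  using r6 by simp

lemma loc_aff:
  assumes "lo < t" "t < hi" "\<bar>\<sigma>\<bar> \<le> (1::real)" "\<forall>s. lo < s \<and> s < hi \<longrightarrow> f s = c + \<sigma> * s"
  shows "\<exists>d>0. \<exists>c \<sigma>. \<bar>\<sigma>\<bar> \<le> (1::real) \<and> (\<forall>s. \<bar>s - t\<bar> < d \<longrightarrow> f s = c + \<sigma> * s)"
proof (intro exI conjI allI impI)
  show "0 < min (t - lo) (hi - t)" using assms by simp
  show "\<bar>\<sigma>\<bar> \<le> 1" by fact
  fix s assume "\<bar>s - t\<bar> < min (t - lo) (hi - t)"
  then show "f s = c + \<sigma> * s" using assms(4) by (simp add: abs_less_iff)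
qed

lemma thf_aff:
  assumes "t \<in> {0<..<C+ep} - {al, A, A + ga, C}"
  shows "\<exists>d>0. \<exists>c \<sigma>. \<bar>\<sigma>\<bar> \<le> (1::real) \<and> (\<forall>s. \<bar>s - t\<bar> < d \<longrightarrow> thf al A ga C ep s = c + \<sigma> * s)"
proof -
  have t: "0 < t" "t < C + ep" "t \<noteq> al" "t \<noteq> A" "t \<noteq> A + ga" "t \<noteq> C" using assms by auto
  consider "t < al" | "al < t \<and> t < A" | "A < t \<and> t < A + ga" | "A + ga < t \<and> t < C" | "C < t"
    using t by linarith
  then show ?thesis
  proof cases
    case 1
    show ?thesis by (rule loc_aff[of "t - 1" t al "-1" "thf al A ga C ep" 0]) (use 1 r1 in auto)
  next
    case 2
    show ?thesis by (rule loc_aff[of al t A 0 "thf al A ga C ep" "-al"]) (use 2 r2 in auto)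
  next
    case 3
    show ?thesis by (rule loc_aff[of A t "A+ga" 1 "thf al A ga C ep" "-al-A"]) (use 3 r3 in auto)
  next
    case 4
    show ?thesis by (rule loc_aff[of "A+ga" t C 0 "thf al A ga C ep" "-al+ga"]) (use 4 r4 in auto)
  next
    case 5
    show ?thesis by (rule loc_aff[of C t "C+ep" "-1" "thf al A ga C ep" "-al+ga+C"]) (use 5 r5 t in auto)
  qed
qed

end

lemma piece_aff:
  assumes "u \<le> v" "\<forall>s\<in>{u..v}. th s = c + \<sigma> * s" "\<sigma> \<noteq> 0"
  shows "integral {u..v} (\<lambda>s. exp (\<i> * of_real (th s))) =
         (exp (\<i> * of_real (c + \<sigma> * v)) - exp (\<i> * of_real (c + \<sigma> * u))) / (\<i> * of_real \<sigma>)"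
proof -
  have "integral {u..v} (\<lambda>s. exp (\<i> * of_real (th s))) = integral {u..v} (\<lambda>s. exp (\<i> * of_real (c + \<sigma> * s)))"
    using assms(2) by (intro integral_cong) auto
  also have "\<dots> = (exp (\<i> * of_real (c + \<sigma> * v)) - exp (\<i> * of_real (c + \<sigma> * u))) / (\<i> * of_real \<sigma>)"
  proof (rule integral_unique)
    have d: "((\<lambda>z. exp (\<i> * (of_real c + of_real \<sigma> * z)) / (\<i> * of_real \<sigma>)) has_field_derivative
         exp (\<i> * of_real (c + \<sigma> * x))) (at (of_real x))" for x
      using assms(3) by (auto intro!: derivative_eq_intros simp: field_simps)
    have dv: "((\<lambda>s. exp (\<i> * of_real (c + \<sigma> * s)) / (\<i> * of_real \<sigma>)) has_vector_derivative
         exp (\<i> * of_real (c + \<sigma> * x))) (at x within {u..v})" for x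
      using has_vector_derivative_real_field[OF d[of x]] by simp
    from fundamental_theorem_of_calculus[OF assms(1) dv]
    show "((\<lambda>s. exp (\<i> * of_real (c + \<sigma> * s))) has_integral
          (exp (\<i> * of_real (c + \<sigma> * v)) - exp (\<i> * of_real (c + \<sigma> * u))) / (\<i> * of_real \<sigma>)) {u..v}"
      by (simp add: diff_divide_distrib)
  qed
  finally show ?thesis .
qed

lemma piece_const:
  assumes "u \<le> v" "\<forall>s\<in>{u..v}. th s = c"
  shows "integral {u..v} (\<lambda>s. exp (\<i> * of_real (th s))) = of_real (v - u) * exp (\<i> * of_real c)"
proof -
  have "integral {u..v} (\<lambda>s. exp (\<i> * of_real (th s))) = integral {u..v} (\<lambda>s. exp (\<i> * of_real c))"
    using assms(2) by (intro integral_cong) auto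
  then show ?thesis using assms(1) by (simp add: scaleR_conv_of_real)
qed

lemma gp_split:
  assumes lip: "\<forall>s s'. \<bar>th s - th s'\<bar> \<le> \<bar>s - s'\<bar>" and "0 \<le> a" "a \<le> b"
  shows "gp th b = gp th a + integral {a..b} (\<lambda>s. exp (\<i> * of_real (th s)))"
  unfolding gp_def
  using Henstock_Kurzweil_Integration.integral_combine[OF assms(2,3) integrable_continuous_interval[OF lip_cont_exp[OF lip]]]
  by simp

lemma gp_total:
  assumes ord: "0 \<le> al" "al \<le> A" "0 \<le> ga" "A + ga \<le> C" "0 \<le> ep"
  shows "gp (thf al A ga C ep) (C + ep) =
     \<i> * (exp (\<i> * of_real (- al)) - 1) + of_real (A - al) * exp (\<i> * of_real (- al))
     - \<i> * (exp (\<i> * of_real (ga - al)) - exp (\<i> * of_real (- al)))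
     + of_real (C - A - ga) * exp (\<i> * of_real (ga - al))
     + \<i> * (exp (\<i> * of_real (ga - al - ep)) - exp (\<i> * of_real (ga - al)))"
proof -
  let ?th = "thf al A ga C ep"
  let ?I = "\<lambda>u v. integral {u..v} (\<lambda>s. exp (\<i> * of_real (?th s)))"
  note lip = thf_lip[OF ord]
  have g0: "gp ?th 0 = 0" by (simp add: gp_def)
  have "gp ?th (C + ep) = gp ?th 0 + ?I 0 al + ?I al A + ?I A (A + ga) + ?I (A + ga) C + ?I C (C + ep)"
    using gp_split[OF lip, of 0 al] gp_split[OF lip, of al A] gp_split[OF lip, of A "A+ga"]
      gp_split[OF lip, of "A+ga" C] gp_split[OF lip, of C "C+ep"] ord by simp
  moreover have "?I 0 al = (exp (\<i> * of_real (0 + (-1) * al)) - exp (\<i> * of_real (0 + (-1) * 0))) / (\<i> * of_real (-1))"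
    by (rule piece_aff) (use ord r1[OF ord] in auto)
  moreover have "?I al A = of_real (A - al) * exp (\<i> * of_real (- al))"
    by (rule piece_const) (use ord r2[OF ord] in auto)
  moreover have "?I A (A + ga) = (exp (\<i> * of_real ((- al - A) + 1 * (A + ga))) - exp (\<i> * of_real ((- al - A) + 1 * A))) / (\<i> * of_real 1)"
    by (rule piece_aff) (use ord r3[OF ord] in auto)
  moreover have "?I (A + ga) C = of_real (C - (A + ga)) * exp (\<i> * of_real (- al + ga))"
    by (rule piece_const) (use ord r4[OF ord] in auto)
  moreover have "?I C (C + ep) = (exp (\<i> * of_real ((- al + ga + C) + (-1) * (C + ep))) - exp (\<i> * of_real ((- al + ga + C) + (-1) * C))) / (\<i> * of_real (-1))"
    by (rule piece_aff) (use ord r5[OF ord] in auto)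
  ultimately show ?thesis using g0
    by (simp add: field_simps)
qed


lemma alg_total:
  assumes "be = 2 - 2 * cos a" "de = 2 + 2 * sin a"
  shows "\<i> * (exp (\<i> * of_real (- a)) - 1) + of_real be * exp (\<i> * of_real (- a))
     - \<i> * (exp (\<i> * of_real (3/2*pi - a)) - exp (\<i> * of_real (- a)))
     + of_real de * exp (\<i> * of_real (3/2*pi - a))
     + \<i> * (exp (\<i> * of_real 0) - exp (\<i> * of_real (3/2*pi - a))) = -2"
proof -
  have c: "cos (pi * 3 / 2) = 0" "sin (pi * 3 / 2) = -1"
    using cos_3over2_pi sin_3over2_pi by (simp_all add: field_simps)
  have sq: "sin a * sin a + cos a * cos a = 1" using sin_cos_squared_add[of a] by (simp add: power2_eq_square)
  show ?thesis
  unfolding assms cis_conv_exp[symmetric]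
  by (simp add: complex_eq_iff cos_diff sin_diff algebra_simps c) (use sq in \<open>linarith\<close>)
qed



context
  fixes al A ga C ep :: real
  assumes ord: "0 \<le> al" "al \<le> A" "0 \<le> ga" "A + ga \<le> C" "0 \<le> ep"
begin

abbreviation "TH \<equiv> thf al A ga C ep"
abbreviation "EI \<equiv> (\<lambda>x::real. exp (\<i> * of_real x))"

lemma lipTH: "\<forall>s s'. \<bar>TH s - TH s'\<bar> \<le> \<bar>s - s'\<bar>" using thf_lip[OF ord] .

lemma reg1: "0 \<le> t \<Longrightarrow> t \<le> al \<Longrightarrow> gp TH t = \<i> * (EI (- t) - 1)"
proof -
  assume t: "0 \<le> t" "t \<le> al"
  have "gp TH t = gp TH 0 + integral {0..t} (\<lambda>s. EI (TH s))" by (rule gp_split[OF lipTH order_refl t(1)])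
  also have "integral {0..t} (\<lambda>s. EI (TH s)) = (EI (0 + (-1) * t) - EI (0 + (-1) * 0)) / (\<i> * of_real (-1))"
    by (rule piece_aff) (use t r1[OF ord] in auto)
  finally show ?thesis by (simp add: gp_def field_simps)
qed

lemma reg2: "al \<le> t \<Longrightarrow> t \<le> A \<Longrightarrow> gp TH t = \<i> * (EI (- al) - 1) + of_real (t - al) * EI (- al)"
proof -
  assume t: "al \<le> t" "t \<le> A"
  have "gp TH t = gp TH al + integral {al..t} (\<lambda>s. EI (TH s))" by (rule gp_split[OF lipTH ord(1) t(1)])
  also have "integral {al..t} (\<lambda>s. EI (TH s)) = of_real (t - al) * EI (- al)"
    by (rule piece_const) (use t r2[OF ord] in auto)
  finally show ?thesis using reg1[OF ord(1) order_refl] by simp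
qed

lemma reg3: "A \<le> t \<Longrightarrow> t \<le> A + ga \<Longrightarrow> gp TH t = \<i> * (EI (- al) - 1) + of_real (A - al) * EI (- al)
     - \<i> * (EI (- al - A + t) - EI (- al))"
proof -
  assume t: "A \<le> t" "t \<le> A + ga"
  have "gp TH t = gp TH A + integral {A..t} (\<lambda>s. EI (TH s))" by (rule gp_split[OF lipTH _ t(1)]) (use ord in auto)
  also have "integral {A..t} (\<lambda>s. EI (TH s)) = (EI ((- al - A) + 1 * t) - EI ((- al - A) + 1 * A)) / (\<i> * of_real 1)"
    by (rule piece_aff) (use t r3[OF ord] in auto)
  finally show ?thesis using reg2[OF ord(2) order_refl] by (simp add: field_simps)
qed

lemma reg4: "A + ga \<le> t \<Longrightarrow> t \<le> C \<Longrightarrow> gp TH t = \<i> * (EI (- al) - 1) + of_real (A - al) * EI (- al)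
     - \<i> * (EI (- al + ga) - EI (- al)) + of_real (t - (A + ga)) * EI (- al + ga)"
proof -
  assume t: "A + ga \<le> t" "t \<le> C"
  have "gp TH t = gp TH (A + ga) + integral {A + ga..t} (\<lambda>s. EI (TH s))" by (rule gp_split[OF lipTH _ t(1)]) (use ord in auto)
  also have "integral {A + ga..t} (\<lambda>s. EI (TH s)) = of_real (t - (A + ga)) * EI (- al + ga)"
    by (rule piece_const) (use t r4[OF ord] in auto)
  finally show ?thesis using reg3[of "A + ga"] ord by simp
qed

lemma reg5: "C \<le> t \<Longrightarrow> t \<le> C + ep \<Longrightarrow> gp TH t = \<i> * (EI (- al) - 1) + of_real (A - al) * EI (- al)
     - \<i> * (EI (- al + ga) - EI (- al)) + of_real (C - (A + ga)) * EI (- al + ga)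
     + \<i> * (EI (- al + ga + C - t) - EI (- al + ga))"
proof -
  assume t: "C \<le> t" "t \<le> C + ep"
  have "gp TH t = gp TH C + integral {C..t} (\<lambda>s. EI (TH s))" by (rule gp_split[OF lipTH _ t(1)]) (use ord in auto)
  also have "integral {C..t} (\<lambda>s. EI (TH s)) = (EI ((- al + ga + C) + (-1) * t) - EI ((- al + ga + C) + (-1) * C)) / (\<i> * of_real (-1))"
    by (rule piece_aff) (use t r5[OF ord] in auto)
  finally show ?thesis using reg4[of C] ord by (simp add: field_simps)
qed

end


lemma EI_add: "exp (\<i> * of_real (x + y)) = exp (\<i> * of_real x) * exp (\<i> * of_real y)"
  by (simp add: distrib_left exp_add)

lemma cos_lip: fixes x y :: real shows "\<bar>cos x - cos y\<bar> \<le> \<bar>x - y\<bar>"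
proof -
  have "\<bar>cos x - cos y\<bar> = \<bar>Re (exp (\<i> * of_real x) - exp (\<i> * of_real y))\<bar>"
    by (simp flip: cis_conv_exp)
  also have "\<dots> \<le> cmod (exp (\<i> * of_real x) - exp (\<i> * of_real y))" by (rule abs_Re_le_cmod)
  finally show ?thesis using exp_ii_diff[of x y] by linarith
qed

lemma sin_lip: fixes x y :: real shows "\<bar>sin x - sin y\<bar> \<le> \<bar>x - y\<bar>"
proof -
  have "\<bar>sin x - sin y\<bar> = \<bar>Im (exp (\<i> * of_real x) - exp (\<i> * of_real y))\<bar>"
    by (simp flip: cis_conv_exp)
  also have "\<dots> \<le> cmod (exp (\<i> * of_real x) - exp (\<i> * of_real y))" by (rule abs_Im_le_cmod)
  finally show ?thesis using exp_ii_diff[of x y] by linarith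
qed

definition "alp p = 3/2*pi*(1-p)"
definition "epp p = 3/2*pi*p"
definition "bep p = 2 - 2 * cos (alp p)"
definition "dep p = 2 + 2 * sin (alp p)"
definition "Ap p = alp p + bep p"
definition "Cp p = Ap p + 3/2*pi + dep p"
definition "Lf p = Cp p + epp p"
definition "thp p = thf (alp p) (Ap p) (3/2*pi) (Cp p) (epp p)"

lemma al_ep: "alp p + epp p = 3/2*pi"
  unfolding alp_def epp_def by (simp add: right_diff_distrib)

lemma ordp:
  assumes "p \<in> {0..1}"
  shows "0 \<le> alp p" "alp p \<le> Ap p" "0 \<le> 3/2*pi" "Ap p + 3/2*pi \<le> Cp p" "0 \<le> epp p"
proof -
  have "0 \<le> bep p" "0 \<le> dep p" using cos_le_one[of "alp p"] sin_ge_minus_one[of "alp p"]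
    unfolding bep_def dep_def by linarith+
  then show "alp p \<le> Ap p" "0 \<le> 3/2*pi" "Ap p + 3/2*pi \<le> Cp p"
    by (auto simp: Ap_def Cp_def)
  show "0 \<le> alp p" "0 \<le> epp p" using assms by (auto simp: alp_def epp_def)
qed

lemma Lf_eq: "Lf p = 3 * pi + bep p + dep p"
  using al_ep[of p] unfolding Lf_def Cp_def Ap_def by simp

lemma Lf_pos: "p \<in> {0..1} \<Longrightarrow> 0 < Lf p"
  using ordp[of p] pi_gt_zero unfolding Lf_def by linarith

lemma Lf_le: "Lf p \<le> 50"
  using cos_ge_minus_one[of "alp p"] sin_le_one[of "alp p"] pi_less_4
  unfolding Lf_eq bep_def dep_def by linarith

lemma bcp_p:
  assumes p: "p \<in> {0..1}"
  shows "bcp 0 1 (-2) 1 (Lf p) (gp (thp p))"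
proof -
  note o = ordp[OF p]
  have LC: "Lf p = Cp p + epp p" by (simp add: Lf_def)
  show ?thesis
  proof (rule bcp_gen[where K = "{alp p, Ap p, Ap p + 3/2*pi, Cp p}"])
    show "\<forall>s s'. \<bar>thp p s - thp p s'\<bar> \<le> \<bar>s - s'\<bar>" unfolding thp_def by (rule thf_lip[OF o])
    show "0 < Lf p" by (rule Lf_pos[OF p])
    show "thp p 0 = 0" unfolding thp_def by (rule thf_0[OF o])
    have "thp p (Lf p) = 0" unfolding thp_def LC thf_L[OF o] using al_ep[of p] by simp
    then show "exp (\<i> * of_real (thp p (Lf p))) = 1" by simp
    have "gp (thp p) (Lf p) = \<i> * (exp (\<i> * of_real (- alp p)) - 1) + of_real (bep p) * exp (\<i> * of_real (- alp p))
     - \<i> * (exp (\<i> * of_real (3/2*pi - alp p)) - exp (\<i> * of_real (- alp p)))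
     + of_real (dep p) * exp (\<i> * of_real (3/2*pi - alp p))
     + \<i> * (exp (\<i> * of_real 0) - exp (\<i> * of_real (3/2*pi - alp p)))"
    proof -
      have e1: "Ap p - alp p = bep p" "Cp p - Ap p - 3/2*pi = dep p" "3/2*pi - alp p - epp p = 0"
        using al_ep[of p] by (simp_all add: Ap_def Cp_def)
      show ?thesis unfolding thp_def LC gp_total[OF o] e1 ..
    qed
    also have "\<dots> = -2" by (rule alg_total) (simp_all add: bep_def dep_def)
    finally show "gp (thp p) (Lf p) = -2" .
    show "finite {alp p, Ap p, Ap p + 3/2*pi, Cp p}" by simp
    show "\<forall>t\<in>{0<..<Lf p} - {alp p, Ap p, Ap p + 3/2*pi, Cp p}. \<exists>d>0. \<exists>c \<sigma>. \<bar>\<sigma>\<bar> \<le> 1 \<and> (\<forall>s. \<bar>s - t\<bar> < d \<longrightarrow> thp p s = c + \<sigma> * s)"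
      unfolding thp_def LC using thf_aff[OF o] by blast
  qed
qed



lemma min_lip1: "\<bar>min (s::real) a - min s b\<bar> \<le> \<bar>a - b\<bar>" by (simp add: min_def abs_if)
lemma min_lip2: "\<bar>min (a::real) c - min b c\<bar> \<le> \<bar>a - b\<bar>" by (simp add: min_def abs_if)
lemma min_lip3: "\<bar>min (c::real) a - min c b\<bar> \<le> \<bar>a - b\<bar>" by (simp add: min_def abs_if)
lemma max_lip: "\<bar>max 0 (a::real) - max 0 b\<bar> \<le> \<bar>a - b\<bar>" by (simp add: max_def abs_if)
lemma clamp_lip: "\<bar>min (g::real) (max 0 x) - min g' (max 0 x')\<bar> \<le> \<bar>g - g'\<bar> + \<bar>x - x'\<bar>"
proof -
  have "\<bar>min g (max 0 x) - min g' (max 0 x')\<bar> \<le> \<bar>min g (max 0 x) - min g' (max 0 x)\<bar> + \<bar>min g' (max 0 x) - min g' (max 0 x')\<bar>"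
    using abs_triangle_ineq[of "min g (max 0 x) - min g' (max 0 x)" "min g' (max 0 x) - min g' (max 0 x')"] by simp
  also have "\<dots> \<le> \<bar>g - g'\<bar> + \<bar>max 0 x - max 0 x'\<bar>" by (intro add_mono min_lip2 min_lip3)
  also have "\<dots> \<le> \<bar>g - g'\<bar> + \<bar>x - x'\<bar>" using max_lip[of x x'] by simp
  finally show ?thesis .
qed

lemma thf_par:
  "\<bar>thf al A ga C ep s - thf al' A' ga C' ep' s\<bar> \<le> \<bar>al - al'\<bar> + \<bar>A - A'\<bar> + \<bar>C - C'\<bar> + \<bar>ep - ep'\<bar>"
proof -
  have h1: "\<bar>min s al - min s al'\<bar> \<le> \<bar>al - al'\<bar>" by (rule min_lip1)
  have h2: "\<bar>min ga (max 0 (s - A)) - min ga (max 0 (s - A'))\<bar> \<le> \<bar>ga - ga\<bar> + \<bar>(s - A) - (s - A')\<bar>"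
    by (rule clamp_lip)
  have h3: "\<bar>min ep (max 0 (s - C)) - min ep' (max 0 (s - C'))\<bar> \<le> \<bar>ep - ep'\<bar> + \<bar>(s - C) - (s - C')\<bar>"
    by (rule clamp_lip)
  have e: "\<bar>(s - A) - (s - A')\<bar> = \<bar>A - A'\<bar>" "\<bar>(s - C) - (s - C')\<bar> = \<bar>C - C'\<bar>" "\<bar>ga - ga\<bar> = 0"
    by (simp_all add: abs_minus_commute)
  let ?x = "min s al" and ?x' = "min s al'" and ?y = "min ga (max 0 (s - A))" and ?y' = "min ga (max 0 (s - A'))"
    and ?z = "min ep (max 0 (s - C))" and ?z' = "min ep' (max 0 (s - C'))"
  have tri: "\<bar>(- x + y - z) - (- x' + y' - z')\<bar> \<le> \<bar>x - x'\<bar> + \<bar>y - y'\<bar> + \<bar>z - z'\<bar>" for x y z x' y' z' :: real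
  proof -
    have "(- x + y - z) - (- x' + y' - z') = (x' - x) + (y - y') + (z' - z)" by simp
    hence "\<bar>(- x + y - z) - (- x' + y' - z')\<bar> \<le> \<bar>x' - x\<bar> + \<bar>y - y'\<bar> + \<bar>z' - z\<bar>"
      using abs_triangle_ineq[of "x' - x + (y - y')" "z' - z"] abs_triangle_ineq[of "x' - x" "y - y'"] by linarith
    thus ?thesis by (simp add: abs_minus_commute)
  qed
  have "\<bar>(- ?x + ?y - ?z) - (- ?x' + ?y' - ?z')\<bar> \<le> \<bar>?x - ?x'\<bar> + \<bar>?y - ?y'\<bar> + \<bar>?z - ?z'\<bar>"
    by (rule tri)
  then show ?thesis unfolding thf_def using h1 h2 h3 e by linarith
qed

lemma linA: "(A::real) \<le> a + b \<Longrightarrow> a = k \<Longrightarrow> b \<le> 2 * a \<Longrightarrow> A \<le> 3 * k" by linarith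
lemma linC: "(C::real) \<le> A + d \<Longrightarrow> A \<le> 3 * k \<Longrightarrow> a = k \<Longrightarrow> d \<le> 2 * a \<Longrightarrow> C \<le> 5 * k" by linarith
lemma linS: "(x::real) \<le> a + A + C + e \<Longrightarrow> a = k \<Longrightarrow> A \<le> 3 * k \<Longrightarrow> C \<le> 5 * k \<Longrightarrow> e = k \<Longrightarrow> x \<le> 10 * k" by linarith
lemma linL: "(x::real) \<le> C + e \<Longrightarrow> C \<le> 5 * k \<Longrightarrow> e = k \<Longrightarrow> x \<le> 6 * k" by linarith
lemma linP: "0 \<le> (d::real) \<Longrightarrow> X \<le> 4 * d \<Longrightarrow> 15 * X \<le> 60 * d" "0 \<le> (d::real) \<Longrightarrow> X \<le> 4 * d \<Longrightarrow> 9 * X \<le> 60 * d" by linarith+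

lemma par_bounds:
  "\<bar>alp p - alp q\<bar> = 3/2*pi*\<bar>p - q\<bar>" "\<bar>epp p - epp q\<bar> = 3/2*pi*\<bar>p - q\<bar>"
  "\<bar>Ap p - Ap q\<bar> \<le> 3 * (3/2*pi*\<bar>p - q\<bar>)" "\<bar>Cp p - Cp q\<bar> \<le> 5 * (3/2*pi*\<bar>p - q\<bar>)"
proof -
  show a: "\<bar>alp p - alp q\<bar> = 3/2*pi*\<bar>p - q\<bar>"
  proof -
    have "alp p - alp q = 3/2*pi*(q - p)" unfolding alp_def by (simp add: right_diff_distrib)
    hence "\<bar>alp p - alp q\<bar> = \<bar>3/2*pi\<bar> * \<bar>q - p\<bar>" by (simp only: abs_mult)
    thus ?thesis by (simp add: abs_minus_commute)
  qed
  show "\<bar>epp p - epp q\<bar> = 3/2*pi*\<bar>p - q\<bar>"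
  proof -
    have "epp p - epp q = 3/2*pi*(p - q)" unfolding epp_def by (simp add: right_diff_distrib)
    hence "\<bar>epp p - epp q\<bar> = \<bar>3/2*pi\<bar> * \<bar>p - q\<bar>" by (simp only: abs_mult)
    thus ?thesis by simp
  qed
  have b: "\<bar>bep p - bep q\<bar> \<le> 2 * \<bar>alp p - alp q\<bar>"
  proof -
    have "bep p - bep q = 2 * (cos (alp q) - cos (alp p))" unfolding bep_def by simp
    hence "\<bar>bep p - bep q\<bar> = \<bar>2\<bar> * \<bar>cos (alp q) - cos (alp p)\<bar>" by (simp only: abs_mult)
    thus ?thesis using cos_lip[of "alp q" "alp p"] by (simp add: abs_minus_commute)
  qed
  have d: "\<bar>dep p - dep q\<bar> \<le> 2 * \<bar>alp p - alp q\<bar>"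
  proof -
    have "dep p - dep q = 2 * (sin (alp p) - sin (alp q))" unfolding dep_def by simp
    hence "\<bar>dep p - dep q\<bar> = \<bar>2\<bar> * \<bar>sin (alp p) - sin (alp q)\<bar>" by (simp only: abs_mult)
    thus ?thesis using sin_lip[of "alp p" "alp q"] by simp
  qed
  have "Ap p - Ap q = (alp p - alp q) + (bep p - bep q)" unfolding Ap_def by simp
  hence A1: "\<bar>Ap p - Ap q\<bar> \<le> \<bar>alp p - alp q\<bar> + \<bar>bep p - bep q\<bar>" by (metis abs_triangle_ineq)
  show A3: "\<bar>Ap p - Ap q\<bar> \<le> 3 * (3/2*pi*\<bar>p - q\<bar>)" by (rule linA[OF A1 a b])
  have "Cp p - Cp q = (Ap p - Ap q) + (dep p - dep q)" unfolding Cp_def by simp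
  hence "\<bar>Cp p - Cp q\<bar> \<le> \<bar>Ap p - Ap q\<bar> + \<bar>dep p - dep q\<bar>" by (metis abs_triangle_ineq)
  then show "\<bar>Cp p - Cp q\<bar> \<le> 5 * (3/2*pi*\<bar>p - q\<bar>)" by (rule linC[OF _ A3 a d])
qed

lemma par_lip: "\<bar>thp p s - thp q s\<bar> \<le> 60 * \<bar>p - q\<bar>"
proof -
  have "\<bar>thp p s - thp q s\<bar> \<le> \<bar>alp p - alp q\<bar> + \<bar>Ap p - Ap q\<bar> + \<bar>Cp p - Cp q\<bar> + \<bar>epp p - epp q\<bar>"
    unfolding thp_def by (rule thf_par)
  also have "\<dots> \<le> 10 * (3/2*pi*\<bar>p - q\<bar>)" using par_bounds[of p q] by (intro linS[OF order_refl]) auto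
  also have "\<dots> \<le> 60 * \<bar>p - q\<bar>"
  proof -
    have h: "pi * \<bar>p - q\<bar> \<le> 4 * \<bar>p - q\<bar>" using pi_less_4 by (intro mult_right_mono) auto
    have e: "10 * (3/2*pi * \<bar>p - q\<bar>) = 15 * (pi * \<bar>p - q\<bar>)" "6 * (3/2*pi * \<bar>p - q\<bar>) = 9 * (pi * \<bar>p - q\<bar>)" by simp_all
    show ?thesis unfolding e by (rule linP(1)[OF abs_ge_zero h])
  qed
  finally show ?thesis .
qed

lemma L_lip: "\<bar>Lf p - Lf q\<bar> \<le> 60 * \<bar>p - q\<bar>"
proof -
  have "Lf p - Lf q = (Cp p - Cp q) + (epp p - epp q)" unfolding Lf_def by simp
  hence "\<bar>Lf p - Lf q\<bar> \<le> \<bar>Cp p - Cp q\<bar> + \<bar>epp p - epp q\<bar>" by (metis abs_triangle_ineq)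
  hence "\<bar>Lf p - Lf q\<bar> \<le> 6 * (3/2*pi*\<bar>p - q\<bar>)" using par_bounds[of p q] by (intro linL) auto
  also have "\<dots> \<le> 60 * \<bar>p - q\<bar>"
  proof -
    have h: "pi * \<bar>p - q\<bar> \<le> 4 * \<bar>p - q\<bar>" using pi_less_4 by (intro mult_right_mono) auto
    have e: "10 * (3/2*pi * \<bar>p - q\<bar>) = 15 * (pi * \<bar>p - q\<bar>)" "6 * (3/2*pi * \<bar>p - q\<bar>) = 9 * (pi * \<bar>p - q\<bar>)" by simp_all
    show ?thesis unfolding e by (rule linP(2)[OF abs_ge_zero h])
  qed
  finally show ?thesis .
qed



lemma c32: "cos (3 * pi / 2) = 0" "sin (3 * pi / 2) = -1"
  using cos_3over2_pi sin_3over2_pi by (simp_all add: field_simps)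

lemma vals0: "alp 0 = 3/2*pi" "bep 0 = 2" "dep 0 = 0" "epp 0 = 0" "Ap 0 = 3/2*pi + 2" "Cp 0 = 3/2*pi + 2 + 3/2*pi"
  "Lf 0 = 3/2*pi + 2 + 3/2*pi"
  by (simp_all add: alp_def bep_def dep_def epp_def Ap_def Cp_def Lf_def c32)

lemma vals1: "alp 1 = 0" "bep 1 = 0" "dep 1 = 2" "epp 1 = 3/2*pi" "Ap 1 = 0" "Cp 1 = 3/2*pi + 2"
  "Lf 1 = 3/2*pi + 2 + 3/2*pi"
  by (simp_all add: alp_def bep_def dep_def epp_def Ap_def Cp_def Lf_def)

lemma agree0:
  assumes t: "t \<in> {0..Lf 0}"
  shows "gp (thp 0) t = rsl_path 0 1 (3/2*pi) 2 (3/2*pi) t"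
proof -
  have o: "0 \<le> 3/2*pi" "3/2*pi \<le> 3/2*pi + 2" "0 \<le> 3/2*pi" "3/2*pi + 2 + 3/2*pi \<le> 3/2*pi + 2 + 3/2*pi" "0 \<le> (0::real)"
    using pi_gt_zero by auto
  have th: "thp 0 = thf (3/2*pi) (3/2*pi + 2) (3/2*pi) (3/2*pi + 2 + 3/2*pi) 0"
    unfolding thp_def vals0 ..
  consider "t \<le> 3/2*pi" | "3/2*pi < t \<and> t \<le> 3/2*pi + 2" | "3/2*pi + 2 < t" by linarith
  then show ?thesis
  proof cases
    case 1
    then show ?thesis using reg1[OF o, of t] t unfolding th
      by (simp add: rsl_path_def Let_def arcR_def)
  next
    case 2
    then show ?thesis using reg2[OF o, of t] t unfolding th
      by (simp add: rsl_path_def Let_def arcR_def)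
  next
    case 3
    have e: "exp (\<i> * of_real (- (3/2*pi) - (3/2*pi + 2) + t)) = exp (\<i> * of_real (- (3/2*pi))) * exp (\<i> * of_real (t - 3/2*pi - 2))"
      unfolding EI_add[symmetric] by (rule arg_cong[where f="\<lambda>x. exp (\<i> * of_real x)"]) simp
    have "t \<le> 3/2*pi + 2 + 3/2*pi" using t vals0 by simp
    then show ?thesis using reg3[OF o, of t] 3 unfolding th e
      by (simp add: rsl_path_def Let_def arcR_def arcL_def algebra_simps)
  qed
qed

lemma agree1:
  assumes t: "t \<in> {0..Lf 1}"
  shows "gp (thp 1) t = lsr_path 0 1 (3/2*pi) 2 (3/2*pi) t"
proof -
  have o: "0 \<le> (0::real)" "0 \<le> (0::real)" "0 \<le> 3/2*pi" "0 + 3/2*pi \<le> 3/2*pi + 2" "0 \<le> 3/2*pi"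
    using pi_gt_zero by auto
  have th: "thp 1 = thf 0 0 (3/2*pi) (3/2*pi + 2) (3/2*pi)"
    unfolding thp_def vals1 ..
  consider "t \<le> 3/2*pi" | "3/2*pi < t \<and> t \<le> 3/2*pi + 2" | "3/2*pi + 2 < t" by linarith
  then show ?thesis
  proof cases
    case 1
    then show ?thesis using reg3[OF o, of t] t unfolding th
      by (simp add: lsr_path_def Let_def arcL_def algebra_simps)
  next
    case 2
    then show ?thesis using reg4[OF o, of t] t unfolding th
      by (simp add: lsr_path_def Let_def arcL_def algebra_simps)
  next
    case 3
    have e: "exp (\<i> * of_real (- 0 + 3/2*pi + (3/2*pi + 2) - t)) = exp (\<i> * of_real (3/2*pi)) * exp (\<i> * of_real (- (t - 3/2*pi - 2)))"
      unfolding EI_add[symmetric] by (rule arg_cong[where f="\<lambda>x. exp (\<i> * of_real x)"]) simp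
    have "t \<le> 3/2*pi + 2 + 3/2*pi" using t vals1 by simp
    then show ?thesis using reg5[OF o, of t] 3 unfolding th e
      by (simp add: lsr_path_def Let_def arcL_def arcR_def algebra_simps)
  qed
qed



definition "P0 = (3/2*pi + 2 + 3/2*pi, rsl_path 0 1 (3/2*pi) 2 (3/2*pi))"
definition "P1 = (3/2*pi + 2 + 3/2*pi, lsr_path 0 1 (3/2*pi) 2 (3/2*pi))"
definition "HH p = (if p = 0 then P0 else if p = 1 then P1 else (Lf p, gp (thp p)))"

lemma Hrep:
  assumes "p \<in> {0..1}"
  shows "HH p = (Lf p, snd (HH p))" "\<forall>t\<in>{0..Lf p}. gp (thp p) t = snd (HH p) t"
  using agree0 agree1 vals0(7) vals1(7) by (auto simp: HH_def P0_def P1_def)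

lemma bcp_H: "p \<in> {0..1} \<Longrightarrow> bcp 0 1 (-2) 1 (fst (HH p)) (snd (HH p))"
  using bcp_cong[OF Hrep(2) bcp_p] Hrep(1) by (metis fst_conv)

lemma c1_H:
  assumes p: "p \<in> {0..1}" and e: "e > 0"
  shows "\<exists>d>0. \<forall>q\<in>{0..1}. \<bar>q - p\<bar> < d \<longrightarrow> c1_close e (HH q) (HH p)"
proof -
  have lip: "\<forall>p\<in>{0..1}. \<forall>s s'. \<bar>thp p s - thp p s'\<bar> \<le> \<bar>s - s'\<bar>"
    unfolding thp_def using thf_lip[OF ordp] by blast
  have par: "\<forall>p\<in>{0..1}. \<forall>q\<in>{0..1}. \<forall>s. \<bar>thp p s - thp q s\<bar> \<le> 60 * \<bar>p - q\<bar>"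
    using par_lip by blast
  have Ll: "\<forall>p\<in>{0..1}. \<forall>q\<in>{0..1}. \<bar>Lf p - Lf q\<bar> \<le> 60 * \<bar>p - q\<bar>" using L_lip by blast
  have Lp: "\<forall>p\<in>{0..1}. 0 < Lf p \<and> Lf p \<le> 60"
  proof
    fix p :: real assume "p \<in> {0..1}"
    then show "0 < Lf p \<and> Lf p \<le> 60" using Lf_pos[of p] Lf_le[of p] by linarith
  qed
  obtain d where d: "d > 0" "\<forall>q\<in>{0..1}. \<bar>q - p\<bar> < d \<longrightarrow> c1_close e (Lf q, gp (thp q)) (Lf p, gp (thp p))"
    using c1_cont_gen[OF lip par Ll Lp p e] by blast
  show ?thesis
  proof (intro exI conjI ballI impI)
    show "d > 0" by fact
    fix q assume q: "q \<in> {0..1}" "\<bar>q - p\<bar> < d"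
    have Lq: "0 \<le> Lf q" "0 \<le> Lf p" using Lf_pos q p by (auto intro: less_imp_le)
    have "c1_close e (Lf q, gp (thp q)) (Lf p, gp (thp p))" using d q by blast
    also have "c1_close e (Lf q, gp (thp q)) (Lf p, gp (thp p)) = c1_close e (Lf q, snd (HH q)) (Lf p, gp (thp p))"
      by (rule c1_close_cong(1)[OF Hrep(2)[OF q(1)] Lq(1)])
    also have "\<dots> = c1_close e (Lf q, snd (HH q)) (Lf p, snd (HH p))"
      by (rule c1_close_cong(2)[OF Hrep(2)[OF p] Lq(2)])
    finally show "c1_close e (HH q) (HH p)" using Hrep(1)[OF q(1)] Hrep(1)[OF p] by metis
  qed
qed

theorem mainTheorem3:
  shows "\<exists>x X y Y a b c a' b' c'.
    norm X = 1 \<and> norm Y = 1 \<and>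
    0 < a \<and> a < 2 * pi \<and> 0 < b \<and> 0 < c \<and> c < 2 * pi \<and>
    0 < a' \<and> a' < 2 * pi \<and> 0 < b' \<and> 0 < c' \<and> c' < 2 * pi \<and>
    bcp x X y Y (a + b + c) (rsl_path x X a b c) \<and>
    bcp x X y Y (a' + b' + c') (lsr_path x X a' b' c') \<and>
    bounded_homotopic x X y Y (a + b + c, rsl_path x X a b c) (a' + b' + c', lsr_path x X a' b' c')"
proof -
  have B0: "bcp 0 1 (-2) 1 (3/2*pi + 2 + 3/2*pi) (rsl_path 0 1 (3/2*pi) 2 (3/2*pi))"
    using bcp_H[of 0] by (simp add: HH_def P0_def)
  have B1: "bcp 0 1 (-2) 1 (3/2*pi + 2 + 3/2*pi) (lsr_path 0 1 (3/2*pi) 2 (3/2*pi))"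
    using bcp_H[of 1] by (simp add: HH_def P1_def)
  have HT: "bounded_homotopic 0 1 (-2) 1 (3/2*pi + 2 + 3/2*pi, rsl_path 0 1 (3/2*pi) 2 (3/2*pi))
      (3/2*pi + 2 + 3/2*pi, lsr_path 0 1 (3/2*pi) 2 (3/2*pi))"
    unfolding bounded_homotopic_def
  proof (intro exI[of _ HH] conjI ballI allI impI)
    show "HH 0 = (3/2*pi + 2 + 3/2*pi, rsl_path 0 1 (3/2*pi) 2 (3/2*pi))" by (simp add: HH_def P0_def)
    show "HH 1 = (3/2*pi + 2 + 3/2*pi, lsr_path 0 1 (3/2*pi) 2 (3/2*pi))" by (simp add: HH_def P1_def)
    show "bcp 0 1 (-2) 1 (fst (HH p)) (snd (HH p))" if "p \<in> {0..1}" for p using bcp_H[OF that] .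
    show "\<exists>d>0. \<forall>q\<in>{0..1}. \<bar>q - p\<bar> < d \<longrightarrow> c1_close e (HH q) (HH p)" if "p \<in> {0..1}" "e > 0" for p e
      using c1_H[OF that] .
  qed
  have pi: "0 < 3/2*pi" "3/2*pi < 2*pi" using pi_gt_zero by auto
  show ?thesis
    apply (rule exI[of _ "0::complex"], rule exI[of _ "1::complex"], rule exI[of _ "-2::complex"], rule exI[of _ "1::complex"])
    apply (rule exI[of _ "3/2*pi"], rule exI[of _ "2"], rule exI[of _ "3/2*pi"])
    apply (rule exI[of _ "3/2*pi"], rule exI[of _ "2"], rule exI[of _ "3/2*pi"])
    using B0 B1 HT pi by simp
qed



end
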